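(* Fix $\mu\in\mathcal P$ and a sample set $\{y^1,\dots,y^N\}\subset\Xi$, $N\ge2$. With all quantities defined as in the context (evaluated at $(y^n,\mu)$ for each sample), \begin{align*} &\big|V[l(u)]-V[l(u^R)]+V[r(u^R_{(1)})]+\underline E[r(u^R_{(2)})]-\underline E[r(u^R_{(3)})]-E[r(u^R_{(4)})]\big|\\ &\le \underline E\Big[\frac{\|r\|_{X'}^2\|r_{(1)}\|_{X'}^2}{\alpha^2}\Big]+E\Big[\frac{\|r\|_{X'}\|r_{(1)}\|_{X'}}{\alpha}\Big]\,\underline E\Big[\frac{\|r\|_{X'}\|r_{(1)}\|_{X'}}{\alpha}\Big] +\underline E\Big[\frac{\big\|r_{(2)}-r_{(3)}-\frac{N-1}{N}r_{(4)}\big\|_{X'}\,\|r\|_{X'}}{\alpha}\Big]. \end{align*}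
   Context: $X$ is a real separable Hilbert space; $\Xi\subset\mathbb R^K$ and $\mathcal P\subset\mathbb R^P$ are parameter domains. For each $(y,\mu)$, $a(\cdot,\cdot;y,\mu)$ is a bounded bilinear form on $X\times X$, coercive with coercivity factor $\alpha(y,\mu):=\inf_{v\ne0}a(v,v;y,\mu)/\|v\|_X^2>0$, and $f(\cdot;y,\mu)$, $l(\cdot;y,\mu)$ are bounded linear forms on $X$. Dual norm $\|F\|_{X'}:=\sup_{v\ne0}|F(v)|/\|v\|_X$. For a function $g$ of $y$ and samples $y^1,\dots,y^N$, define $E[g]:=\frac1N\sum_{n}g(y^n)$, $\underline E[g]:=\frac1{N-1}\sum_n g(y^n)$, $V[g]:=\underline E[g^2]-\underline E[g]E[g]$. Fix subspaces $X^R,X^R_{(1)},\dots,X^R_{(4)}\subset X$. For each $(y,\mu)$ (forms evaluated at $(y,\mu)$): $u\in X$ solves $a(u,v)=f(v)$ $\forall v\in X$; $u^R\in X^R$ solves $a(u^R,v)=f(v)$ $\forall v\in X^R$; residual $r(\cdot):=f(\cdot)-a(u^R,\cdot)$. Linear forms: $l_{(1)}(\cdot):=l(\cdot)$; $l_{(2)}(\cdot):=2\big(l(u^R)-r(u^R_{(1)})\big)l(\cdot)$; $l_{(3)}(\cdot):=E\big[l(u^R)-r(u^R_{(1)})\big]\,l(\cdot)$; $l_{(4)}(\cdot):=\underline E\big[l(u^R)-r(u^R_{(1)})\big]\,l(\cdot)$, where in $l_{(3)},l_{(4)}$ the Monte Carlo means are taken over the samples (so they are scalars independent of $y$). For $i=1,\dots,4$,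 $u^R_{(i)}\in X^R_{(i)}$ solves $a(v,u^R_{(i)})=-l_{(i)}(v)$ for all $v\in X^R_{(i)}$ (defined successively), and $r_{(i)}(\cdot):=-l_{(i)}(\cdot)-a(\cdot,u^R_{(i)})$. *)

theory Defs
  imports "HOL-Analysis.Analysis"
begin

definition coercivity_factor :: "('x::real_normed_vector \<Rightarrow> 'x \<Rightarrow> real) \<Rightarrow> real" where
  "coercivity_factor A = (INF v \<in> - {0}. A v v / (norm v)\<^sup>2)"

abbreviation dual_norm :: "('x::real_normed_vector \<Rightarrow> real) \<Rightarrow> real" where
  "dual_norm F \<equiv> onorm F"

definition MC_E :: "nat \<Rightarrow> (nat \<Rightarrow> real) \<Rightarrow> real" where
  "MC_E N g = (\<Sum>n<N. g n) / real N"

definition MC_Eu :: "nat \<Rightarrow> (nat \<Rightarrow> real) \<Rightarrow> real" where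
  "MC_Eu N g = (\<Sum>n<N. g n) / (real N - 1)"

definition MC_V :: "nat \<Rightarrow> (nat \<Rightarrow> real) \<Rightarrow> real" where
  "MC_V N g = MC_Eu N (\<lambda>n. (g n)\<^sup>2) - MC_Eu N g * MC_E N g"

end

theory Submission
  imports Defs
begin

lemma alg:
  fixes Q d t w2 w3 w4 :: "nat \<Rightarrow> real"
  assumes N2: "N \<ge> 2"
  shows "MC_V N (\<lambda>n. Q n - d n) - MC_V N (\<lambda>n. Q n + t n) + MC_V N t
     + MC_Eu N (\<lambda>n. - (2 * Q n * (- t n - d n)) - w2 n)
     - MC_Eu N (\<lambda>n. - (MC_E N Q * (- t n - d n)) - w3 n)
     - MC_E N (\<lambda>n. - (MC_Eu N Q * (- t n - d n)) - w4 n)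
   = MC_V N d - MC_Eu N (\<lambda>n. w2 n - w3 n - (real N - 1) / real N * w4 n)"
proof -
  have N1: "real N - 1 \<noteq> 0" "real N \<noteq> 0" using N2 by auto
  define A where "A = (\<Sum>n<N. Q n)"
  define B where "B = (\<Sum>n<N. d n)"
  define T where "T = (\<Sum>n<N. t n)"
  define W2 where "W2 = (\<Sum>n<N. w2 n)"
  define W3 where "W3 = (\<Sum>n<N. w3 n)"
  define W4 where "W4 = (\<Sum>n<N. w4 n)"
  define QQ where "QQ = (\<Sum>n<N. Q n * Q n)"
  define dd where "dd = (\<Sum>n<N. d n * d n)"
  define tt where "tt = (\<Sum>n<N. t n * t n)"
  define Qd where "Qd = (\<Sum>n<N. Q n * d n)"
  define Qt where "Qt = (\<Sum>n<N. Q n * t n)"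
  have e1: "(\<Sum>n<N. (Q n - d n)\<^sup>2) = QQ - 2 * Qd + dd"
    unfolding QQ_def Qd_def dd_def
    by (simp add: power2_eq_square algebra_simps sum.distrib sum_subtractf sum_distrib_left)
  have e2: "(\<Sum>n<N. (Q n + t n)\<^sup>2) = QQ + 2 * Qt + tt"
    unfolding QQ_def Qt_def tt_def
    by (simp add: power2_eq_square algebra_simps sum.distrib sum_subtractf sum_distrib_left)
  have e3: "(\<Sum>n<N. (t n)\<^sup>2) = tt" "(\<Sum>n<N. (d n)\<^sup>2) = dd"
    unfolding tt_def dd_def by (simp_all add: power2_eq_square)
  have e4: "(\<Sum>n<N. Q n - d n) = A - B" "(\<Sum>n<N. Q n + t n) = A + T"
    unfolding A_def B_def T_def by (simp_all add: sum.distrib sum_subtractf)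
  have e5: "(\<Sum>n<N. - (2 * Q n * (- t n - d n)) - w2 n) = 2 * Qt + 2 * Qd - W2"
    unfolding Qt_def Qd_def W2_def
    by (simp add: algebra_simps sum.distrib sum_subtractf sum_distrib_left)
  have e6: "\<And>c. (\<Sum>n<N. - (c * (- t n - d n)) - w3 n) = c * T + c * B - W3"
    unfolding T_def B_def W3_def
    by (simp add: algebra_simps sum.distrib sum_subtractf sum_distrib_left)
  have e7: "\<And>c. (\<Sum>n<N. - (c * (- t n - d n)) - w4 n) = c * T + c * B - W4"
    unfolding T_def B_def W4_def
    by (simp add: algebra_simps sum.distrib sum_subtractf sum_distrib_left)
  have e8: "(\<Sum>n<N. w2 n - w3 n - (real N - 1) / real N * w4 n) = W2 - W3 - (real N - 1) / real N * W4"
    unfolding W2_def W3_def W4_def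
    by (simp add: sum.distrib sum_subtractf sum_distrib_left)
  show ?thesis
    unfolding MC_V_def MC_E_def MC_Eu_def
    apply (simp only: e1 e2 e3 e4 e5 e6 e7 e8 flip: A_def B_def T_def)
    using N1 
    apply (simp add: divide_simps)
    apply (simp add: algebra_simps)
    done
qed

lemma MC_cong:
  assumes "\<And>n. n < N \<Longrightarrow> g n = h n"
  shows "MC_E N g = MC_E N h" "MC_Eu N g = MC_Eu N h" "MC_V N g = MC_V N h"
proof -
  have s1: "(\<Sum>n<N. g n) = (\<Sum>n<N. h n)" using assms by (intro sum.cong) auto
  have s2: "(\<Sum>n<N. (g n)\<^sup>2) = (\<Sum>n<N. (h n)\<^sup>2)" using assms by (intro sum.cong) auto
  show "MC_E N g = MC_E N h" "MC_Eu N g = MC_Eu N h" "MC_V N g = MC_V N h"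
    unfolding MC_E_def MC_Eu_def MC_V_def using s1 s2 by simp_all
qed

lemma sum_abs_bound:
  fixes g h :: "nat \<Rightarrow> real"
  assumes "\<And>n. n < N \<Longrightarrow> \<bar>g n\<bar> \<le> h n"
  shows "\<bar>\<Sum>n<N. g n\<bar> \<le> (\<Sum>n<N. h n)"
  by (rule order_trans[OF sum_abs sum_mono]) (use assms in auto)

lemma ineq:
  fixes d w b c :: "nat \<Rightarrow> real"
  assumes N2: "N \<ge> 2"
    and db: "\<And>n. n < N \<Longrightarrow> \<bar>d n\<bar> \<le> b n"
    and wc: "\<And>n. n < N \<Longrightarrow> \<bar>w n\<bar> \<le> c n"
  shows "\<bar>MC_V N d - MC_Eu N w\<bar> \<le> MC_Eu N (\<lambda>n. (b n)\<^sup>2) + MC_E N b * MC_Eu N b + MC_Eu N c"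
proof -
  have D: "real N - 1 > 0" "real N > 0" using N2 by auto
  have b0: "\<And>n. n < N \<Longrightarrow> 0 \<le> b n" using db by (meson abs_ge_zero order_trans)
  have d2: "\<bar>\<Sum>n<N. (d n)\<^sup>2\<bar> \<le> (\<Sum>n<N. (b n)\<^sup>2)"
  proof (rule sum_abs_bound)
    fix n assume n: "n < N"
    have "\<bar>d n\<bar> \<le> \<bar>b n\<bar>" using db[OF n] by linarith
    then have "(d n)\<^sup>2 \<le> (b n)\<^sup>2" using abs_le_square_iff by blast
    then show "\<bar>(d n)\<^sup>2\<bar> \<le> (b n)\<^sup>2" by simp
  qed
  have s1: "\<bar>\<Sum>n<N. d n\<bar> \<le> (\<Sum>n<N. b n)" by (rule sum_abs_bound) (use db in auto)
  have s2: "\<bar>\<Sum>n<N. w n\<bar> \<le> (\<Sum>n<N. c n)" by (rule sum_abs_bound) (use wc in auto)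
  have D1: "\<bar>real N - 1\<bar> = real N - 1" "\<bar>real N\<bar> = real N" using D by simp_all
  have a1: "\<bar>MC_Eu N (\<lambda>n. (d n)\<^sup>2)\<bar> \<le> MC_Eu N (\<lambda>n. (b n)\<^sup>2)"
    unfolding MC_Eu_def abs_divide D1 by (rule divide_right_mono[OF d2]) (use D in simp)
  have a2: "\<bar>MC_Eu N d\<bar> \<le> MC_Eu N b"
    unfolding MC_Eu_def abs_divide D1 by (rule divide_right_mono[OF s1]) (use D in simp)
  have a3: "\<bar>MC_E N d\<bar> \<le> MC_E N b"
    unfolding MC_E_def abs_divide D1 by (rule divide_right_mono[OF s1]) (use D in simp)
  have a4: "\<bar>MC_Eu N w\<bar> \<le> MC_Eu N c"
    unfolding MC_Eu_def abs_divide D1 by (rule divide_right_mono[OF s2]) (use D in simp)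
  have a5: "\<bar>MC_Eu N d * MC_E N d\<bar> \<le> MC_E N b * MC_Eu N b"
    unfolding abs_mult using a2 a3
    by (metis abs_ge_zero mult.commute mult_mono order_trans)
  show ?thesis unfolding MC_V_def using a1 a4 a5 by linarith
qed

lemma coer_le:
  fixes A :: "'x::real_normed_vector \<Rightarrow> 'x \<Rightarrow> real"
  assumes "bounded_bilinear A"
  shows "coercivity_factor A * (norm v)\<^sup>2 \<le> A v v"
proof (cases "v = 0")
  case True
  then show ?thesis using bounded_bilinear.zero_left[OF assms] by simp
next
  case False
  obtain K where K: "\<And>a b. norm (A a b) \<le> norm a * norm b * K"
    using bounded_bilinear.bounded[OF assms] by blast
  have bdd: "bdd_below ((\<lambda>v. A v v / (norm v)\<^sup>2) ` (- {0}))"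
  proof (rule bdd_belowI2[where m="- K"])
    fix x :: 'x assume x: "x \<in> - {0}"
    have "\<bar>A x x\<bar> \<le> (norm x)\<^sup>2 * K" using K[of x x] by (simp add: power2_eq_square)
    then have "- K * (norm x)\<^sup>2 \<le> A x x" by (simp add: abs_le_iff algebra_simps)
    then show "- K \<le> A x x / (norm x)\<^sup>2" using x by (simp add: le_divide_eq)
  qed
  have "coercivity_factor A \<le> A v v / (norm v)\<^sup>2"
    unfolding coercivity_factor_def by (rule cInf_lower) (use False bdd in auto)
  then show ?thesis using False by (simp add: le_divide_eq)
qed

lemma err_bound:
  fixes A :: "'x::real_normed_vector \<Rightarrow> 'x \<Rightarrow> real"
  assumes bil: "bounded_bilinear A" and pos: "0 < coercivity_factor A"
    and F: "bounded_linear F" and R: "bounded_linear R"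
    and eq: "\<And>v. A e v = R v"
  shows "\<bar>F e\<bar> \<le> onorm F * onorm R / coercivity_factor A"
proof -
  let ?a = "coercivity_factor A"
  have "?a * (norm e)\<^sup>2 \<le> R e" using coer_le[OF bil, of e] eq by simp
  also have "\<dots> \<le> onorm R * norm e" using onorm[OF R, of e] by simp
  finally have h: "?a * (norm e)\<^sup>2 \<le> onorm R * norm e" .
  have ne: "?a * norm e \<le> onorm R"
  proof (cases "e = 0")
    case True then show ?thesis using onorm_pos_le[OF R] by simp
  next
    case False
    then have "norm e > 0" by simp
    with h show ?thesis by (simp add: power2_eq_square mult.assoc[symmetric])
  qed
  have "\<bar>F e\<bar> \<le> onorm F * norm e" using onorm[OF F, of e] by simp
  also have "\<dots> \<le> onorm F * (onorm R / ?a)"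
    using ne pos onorm_pos_le[OF F] by (intro mult_left_mono) (simp_all add: field_simps)
  finally show ?thesis by simp
qed

theorem mainTheorem4:
  fixes a :: "real^'k \<Rightarrow> real^'p \<Rightarrow> 'x::{real_inner,complete_space} \<Rightarrow> 'x \<Rightarrow> real"
    and f l :: "real^'k \<Rightarrow> real^'p \<Rightarrow> 'x \<Rightarrow> real"
    and Xi :: "(real^'k) set" and PP :: "(real^'p) set"
    and XR XR1 XR2 XR3 XR4 :: "'x set"
    and u uR u1 u2 u3 u4 :: "real^'k \<Rightarrow> real^'p \<Rightarrow> 'x"
    and r r1 r2 r3 r4 l2 l3 l4 :: "real^'k \<Rightarrow> real^'p \<Rightarrow> 'x \<Rightarrow> real"
    and Q :: "real^'k \<Rightarrow> real^'p \<Rightarrow> real"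
    and ys :: "nat \<Rightarrow> real^'k" and \<mu> :: "real^'p" and N :: nat
  assumes sep: "separable_space (euclidean :: 'x topology)"
    and bil: "\<And>y m. y \<in> Xi \<Longrightarrow> m \<in> PP \<Longrightarrow> bounded_bilinear (a y m)"
    and coer: "\<And>y m. y \<in> Xi \<Longrightarrow> m \<in> PP \<Longrightarrow> 0 < coercivity_factor (a y m)"
    and f_lin: "\<And>y m. y \<in> Xi \<Longrightarrow> m \<in> PP \<Longrightarrow> bounded_linear (f y m)"
    and l_lin: "\<And>y m. y \<in> Xi \<Longrightarrow> m \<in> PP \<Longrightarrow> bounded_linear (l y m)"
    and subs: "subspace XR" "subspace XR1" "subspace XR2" "subspace XR3" "subspace XR4"
    and u_sol: "\<And>y m v. y \<in> Xi \<Longrightarrow> m \<in> PP \<Longrightarrow> a y m (u y m) v = f y m v"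
    and uR_mem: "\<And>y m. y \<in> Xi \<Longrightarrow> m \<in> PP \<Longrightarrow> uR y m \<in> XR"
    and uR_sol: "\<And>y m v. y \<in> Xi \<Longrightarrow> m \<in> PP \<Longrightarrow> v \<in> XR \<Longrightarrow> a y m (uR y m) v = f y m v"
    and r_def: "r = (\<lambda>y m v. f y m v - a y m (uR y m) v)"
    and u1_mem: "\<And>y m. y \<in> Xi \<Longrightarrow> m \<in> PP \<Longrightarrow> u1 y m \<in> XR1"
    and u1_sol: "\<And>y m v. y \<in> Xi \<Longrightarrow> m \<in> PP \<Longrightarrow> v \<in> XR1 \<Longrightarrow> a y m v (u1 y m) = - l y m v"
    and r1_def: "r1 = (\<lambda>y m v. - l y m v - a y m v (u1 y m))"
    and Q_def: "Q = (\<lambda>y m. l y m (uR y m) - r y m (u1 y m))"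
    and l2_def: "l2 = (\<lambda>y m v. 2 * Q y m * l y m v)"
    and l3_def: "l3 = (\<lambda>y m v. MC_E N (\<lambda>n. Q (ys n) m) * l y m v)"
    and l4_def: "l4 = (\<lambda>y m v. MC_Eu N (\<lambda>n. Q (ys n) m) * l y m v)"
    and u2_mem: "\<And>y m. y \<in> Xi \<Longrightarrow> m \<in> PP \<Longrightarrow> u2 y m \<in> XR2"
    and u2_sol: "\<And>y m v. y \<in> Xi \<Longrightarrow> m \<in> PP \<Longrightarrow> v \<in> XR2 \<Longrightarrow> a y m v (u2 y m) = - l2 y m v"
    and r2_def: "r2 = (\<lambda>y m v. - l2 y m v - a y m v (u2 y m))"
    and u3_mem: "\<And>y m. y \<in> Xi \<Longrightarrow> m \<in> PP \<Longrightarrow> u3 y m \<in> XR3"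
    and u3_sol: "\<And>y m v. y \<in> Xi \<Longrightarrow> m \<in> PP \<Longrightarrow> v \<in> XR3 \<Longrightarrow> a y m v (u3 y m) = - l3 y m v"
    and r3_def: "r3 = (\<lambda>y m v. - l3 y m v - a y m v (u3 y m))"
    and u4_mem: "\<And>y m. y \<in> Xi \<Longrightarrow> m \<in> PP \<Longrightarrow> u4 y m \<in> XR4"
    and u4_sol: "\<And>y m v. y \<in> Xi \<Longrightarrow> m \<in> PP \<Longrightarrow> v \<in> XR4 \<Longrightarrow> a y m v (u4 y m) = - l4 y m v"
    and r4_def: "r4 = (\<lambda>y m v. - l4 y m v - a y m v (u4 y m))"
    and mu: "\<mu> \<in> PP"
    and samples: "\<And>n. n < N \<Longrightarrow> ys n \<in> Xi"
    and N2: "N \<ge> 2"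
  shows "\<bar>MC_V N (\<lambda>n. l (ys n) \<mu> (u (ys n) \<mu>))
          - MC_V N (\<lambda>n. l (ys n) \<mu> (uR (ys n) \<mu>))
          + MC_V N (\<lambda>n. r (ys n) \<mu> (u1 (ys n) \<mu>))
          + MC_Eu N (\<lambda>n. r (ys n) \<mu> (u2 (ys n) \<mu>))
          - MC_Eu N (\<lambda>n. r (ys n) \<mu> (u3 (ys n) \<mu>))
          - MC_E N (\<lambda>n. r (ys n) \<mu> (u4 (ys n) \<mu>))\<bar>
   \<le> MC_Eu N (\<lambda>n. (dual_norm (r (ys n) \<mu>))\<^sup>2 * (dual_norm (r1 (ys n) \<mu>))\<^sup>2
                     / (coercivity_factor (a (ys n) \<mu>))\<^sup>2)
     + MC_E N (\<lambda>n. dual_norm (r (ys n) \<mu>) * dual_norm (r1 (ys n) \<mu>)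
                     / coercivity_factor (a (ys n) \<mu>))
       * MC_Eu N (\<lambda>n. dual_norm (r (ys n) \<mu>) * dual_norm (r1 (ys n) \<mu>)
                     / coercivity_factor (a (ys n) \<mu>))
     + MC_Eu N (\<lambda>n. dual_norm (\<lambda>v. r2 (ys n) \<mu> v - r3 (ys n) \<mu> v
                                    - (real N - 1) / real N * r4 (ys n) \<mu> v)
                     * dual_norm (r (ys n) \<mu>) / coercivity_factor (a (ys n) \<mu>))"
proof -
  define e where "e = (\<lambda>y. u y \<mu> - uR y \<mu>)"
  define EQ where "EQ = MC_E N (\<lambda>n. Q (ys n) \<mu>)"
  define EuQ where "EuQ = MC_Eu N (\<lambda>n. Q (ys n) \<mu>)"
  define k where "k = (real N - 1) / real N"
  have BL: "bounded_linear (\<lambda>v. a y \<mu> v w)" if y: "y \<in> Xi" for y w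
    by (rule bounded_bilinear.bounded_linear_left[OF bil[OF y mu]])
  have F1: "r y \<mu> = (\<lambda>v. a y \<mu> (e y) v)" if y: "y \<in> Xi" for y
    by (rule ext) (simp add: r_def e_def u_sol[OF y mu] bounded_bilinear.diff_left[OF bil[OF y mu]])
  have F2: "bounded_linear (r y \<mu>)" if y: "y \<in> Xi" for y
    unfolding F1[OF y] by (rule bounded_bilinear.bounded_linear_right[OF bil[OF y mu]])
  have F3: "bounded_linear (r1 y \<mu>)" if y: "y \<in> Xi" for y
    unfolding r1_def
    by (intro bounded_linear_sub bounded_linear_minus l_lin[OF y mu] BL[OF y])
  have F4: "bounded_linear (\<lambda>v. r2 y \<mu> v - r3 y \<mu> v - k * r4 y \<mu> v)" if y: "y \<in> Xi" for y
    unfolding r2_def r3_def r4_def l2_def l3_def l4_def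
    by (intro bounded_linear_sub bounded_linear_minus bounded_linear_const_mult l_lin[OF y mu] BL[OF y])
  have le: "l y \<mu> (e y) = - r y \<mu> (u1 y \<mu>) - r1 y \<mu> (e y)" if y: "y \<in> Xi" for y
    using F1[OF y] by (simp add: r1_def)
  have F5: "l y \<mu> (u y \<mu>) = Q y \<mu> - r1 y \<mu> (e y)" if y: "y \<in> Xi" for y
  proof -
    have "l y \<mu> (e y) = l y \<mu> (u y \<mu>) - l y \<mu> (uR y \<mu>)"
      unfolding e_def by (rule linear_diff[OF bounded_linear.linear[OF l_lin[OF y mu]]])
    then show ?thesis using le[OF y] by (simp add: Q_def)
  qed
  have F6: "l y \<mu> (uR y \<mu>) = Q y \<mu> + r y \<mu> (u1 y \<mu>)" if y: "y \<in> Xi" for y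
    by (simp add: Q_def)
  have F7: "r y \<mu> (u2 y \<mu>) = - (2 * Q y \<mu> * (- r y \<mu> (u1 y \<mu>) - r1 y \<mu> (e y))) - r2 y \<mu> (e y)"
    if y: "y \<in> Xi" for y
    using F1[OF y] le[OF y] by (simp add: r2_def l2_def)
  have F8: "r y \<mu> (u3 y \<mu>) = - (EQ * (- r y \<mu> (u1 y \<mu>) - r1 y \<mu> (e y))) - r3 y \<mu> (e y)"
    if y: "y \<in> Xi" for y
    using F1[OF y] le[OF y] by (simp add: r3_def l3_def EQ_def)
  have F9: "r y \<mu> (u4 y \<mu>) = - (EuQ * (- r y \<mu> (u1 y \<mu>) - r1 y \<mu> (e y))) - r4 y \<mu> (e y)"
    if y: "y \<in> Xi" for y
    using F1[OF y] le[OF y] by (simp add: r4_def l4_def EuQ_def)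
  have F10: "\<bar>r1 y \<mu> (e y)\<bar> \<le> dual_norm (r y \<mu>) * dual_norm (r1 y \<mu>) / coercivity_factor (a y \<mu>)"
    if y: "y \<in> Xi" for y
    using err_bound[OF bil[OF y mu] coer[OF y mu] F3[OF y] F2[OF y], of "e y"] F1[OF y]
    by (simp add: mult.commute)
  have F11: "\<bar>r2 y \<mu> (e y) - r3 y \<mu> (e y) - k * r4 y \<mu> (e y)\<bar>
     \<le> dual_norm (\<lambda>v. r2 y \<mu> v - r3 y \<mu> v - k * r4 y \<mu> v) * dual_norm (r y \<mu>) / coercivity_factor (a y \<mu>)"
    if y: "y \<in> Xi" for y
    using err_bound[OF bil[OF y mu] coer[OF y mu] F4[OF y] F2[OF y], of "e y"] F1[OF y]
    by simp
  define Qn where "Qn = (\<lambda>n. Q (ys n) \<mu>)"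
  define dn where "dn = (\<lambda>n. r1 (ys n) \<mu> (e (ys n)))"
  define tn where "tn = (\<lambda>n. r (ys n) \<mu> (u1 (ys n) \<mu>))"
  define w2 where "w2 = (\<lambda>n. r2 (ys n) \<mu> (e (ys n)))"
  define w3 where "w3 = (\<lambda>n. r3 (ys n) \<mu> (e (ys n)))"
  define w4 where "w4 = (\<lambda>n. r4 (ys n) \<mu> (e (ys n)))"
  define b where "b = (\<lambda>n. dual_norm (r (ys n) \<mu>) * dual_norm (r1 (ys n) \<mu>)
                     / coercivity_factor (a (ys n) \<mu>))"
  define c where "c = (\<lambda>n. dual_norm (\<lambda>v. r2 (ys n) \<mu> v - r3 (ys n) \<mu> v
                                    - (real N - 1) / real N * r4 (ys n) \<mu> v)
                     * dual_norm (r (ys n) \<mu>) / coercivity_factor (a (ys n) \<mu>))"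
  have EQ': "EQ = MC_E N Qn" "EuQ = MC_Eu N Qn" unfolding EQ_def EuQ_def Qn_def by simp_all
  have c1: "MC_V N (\<lambda>n. l (ys n) \<mu> (u (ys n) \<mu>)) = MC_V N (\<lambda>n. Qn n - dn n)"
    by (rule MC_cong) (simp add: F5 samples Qn_def dn_def)
  have c2: "MC_V N (\<lambda>n. l (ys n) \<mu> (uR (ys n) \<mu>)) = MC_V N (\<lambda>n. Qn n + tn n)"
    by (rule MC_cong) (simp add: F6 samples Qn_def tn_def)
  have c3: "MC_V N (\<lambda>n. r (ys n) \<mu> (u1 (ys n) \<mu>)) = MC_V N tn"
    unfolding tn_def ..
  have c4: "MC_Eu N (\<lambda>n. r (ys n) \<mu> (u2 (ys n) \<mu>)) = MC_Eu N (\<lambda>n. - (2 * Qn n * (- tn n - dn n)) - w2 n)"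
    by (rule MC_cong) (simp add: F7 samples Qn_def tn_def dn_def w2_def)
  have c5: "MC_Eu N (\<lambda>n. r (ys n) \<mu> (u3 (ys n) \<mu>)) = MC_Eu N (\<lambda>n. - (MC_E N Qn * (- tn n - dn n)) - w3 n)"
    by (rule MC_cong) (simp add: F8 samples Qn_def tn_def dn_def w3_def EQ_def)
  have c6: "MC_E N (\<lambda>n. r (ys n) \<mu> (u4 (ys n) \<mu>)) = MC_E N (\<lambda>n. - (MC_Eu N Qn * (- tn n - dn n)) - w4 n)"
    by (rule MC_cong) (simp add: F9 samples Qn_def tn_def dn_def w4_def EuQ_def)
  have main: "\<bar>MC_V N dn - MC_Eu N (\<lambda>n. w2 n - w3 n - (real N - 1) / real N * w4 n)\<bar>
     \<le> MC_Eu N (\<lambda>n. (b n)\<^sup>2) + MC_E N b * MC_Eu N b + MC_Eu N c"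
  proof (rule ineq[OF N2])
    fix n assume n: "n < N"
    show "\<bar>dn n\<bar> \<le> b n" unfolding dn_def b_def by (rule F10[OF samples[OF n]])
    show "\<bar>w2 n - w3 n - (real N - 1) / real N * w4 n\<bar> \<le> c n"
      unfolding w2_def w3_def w4_def c_def using F11[OF samples[OF n]] by (simp add: k_def)
  qed
  have bb: "MC_Eu N (\<lambda>n. (b n)\<^sup>2) = MC_Eu N (\<lambda>n. (dual_norm (r (ys n) \<mu>))\<^sup>2 * (dual_norm (r1 (ys n) \<mu>))\<^sup>2
                     / (coercivity_factor (a (ys n) \<mu>))\<^sup>2)"
    unfolding b_def by (simp add: power_divide power_mult_distrib)
  show ?thesis
    unfolding c1 c2 c3 c4 c5 c6 alg[OF N2]
    using main unfolding bb unfolding b_def c_def .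
qed

end
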